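(* Let $F$ be a smooth regular distribution with PDF $f$ and $\ell$ an integer. For any two points $x<x'$ with $2^{-\ell}\le1-F(x')<1-F(x)\le2^{-\ell+1}$ it holds that $f(x')>2^{-33}f(x)$.
   Context: A distribution is smooth if it has no point masses and its PDF $f$ is $C^1$. A smooth distribution is regular iff $f'(v)(1-F(v))\ge-2f(v)^2$ for all $v$. *)

theory Defs
  imports "HOL-Analysis.Analysis"
begin

definition C1_fun :: "(real \<Rightarrow> real) \<Rightarrow> bool" where
  "C1_fun f \<longleftrightarrow> (\<exists>f'. (\<forall>x. (f has_real_derivative f' x) (at x)) \<and> continuous_on UNIV f')"

text \<open>f is a probability density function and F is the CDF of the distribution it defines:
  F x = integral of f over (-infinity, x]. Having a density, the distribution has no point masses.\<close>
definition is_pdf_cdf :: "(real \<Rightarrow> real) \<Rightarrow> (real \<Rightarrow> real) \<Rightarrow> bool" where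
  "is_pdf_cdf F f \<longleftrightarrow> (\<forall>x. 0 \<le> f x) \<and> (f has_integral 1) UNIV \<and>
     (\<forall>x. (f has_integral F x) {..x})"

definition smooth_distribution :: "(real \<Rightarrow> real) \<Rightarrow> (real \<Rightarrow> real) \<Rightarrow> bool" where
  "smooth_distribution F f \<longleftrightarrow> is_pdf_cdf F f \<and> C1_fun f"

definition regular_distribution :: "(real \<Rightarrow> real) \<Rightarrow> (real \<Rightarrow> real) \<Rightarrow> bool" where
  "regular_distribution F f \<longleftrightarrow> smooth_distribution F f \<and>
     (\<forall>v. deriv f v * (1 - F v) \<ge> - 2 * (f v)\<^sup>2)"

end

theory Submission
  imports Defs
begin

lemma F_diff:
  assumes "is_pdf_cdf F f" "continuous_on UNIV f" "a \<le> b"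
  shows "F b = F a + integral {a..b} f"
proof -
  have I: "\<And>x. (f has_integral F x) {..x}" using assms(1) unfolding is_pdf_cdf_def by blast
  have ab: "(f has_integral integral {a..b} f) {a..b}"
    using assms(2) continuous_on_subset integrable_continuous_real integrable_integral by blast
  have "(f has_integral (F a + integral {a..b} f)) ({..a} \<union> {a..b})"
  proof (rule has_integral_Un[OF I ab])
    have "{..a} \<inter> {a..b} = {a}" using assms(3) by auto
    then show "negligible ({..a} \<inter> {a..b})" by simp
  qed
  moreover have "{..a} \<union> {a..b} = {..b}" using assms(3) by auto
  ultimately show ?thesis using I[of b] has_integral_unique by metis
qed

lemma F_deriv:
  assumes "is_pdf_cdf F f" "continuous_on UNIV f"
  shows "(F has_real_derivative f t) (at t)"
proof -
  have "((\<lambda>u. integral {t-1..u} f) has_real_derivative f t) (at t within {t-1..t+1})"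
    by (rule integral_has_real_derivative) (auto intro: continuous_on_subset[OF assms(2)])
  then have "((\<lambda>u. F (t-1) + integral {t-1..u} f) has_real_derivative f t) (at t within {t-1..t+1})"
    by (auto intro!: derivative_eq_intros)
  then have "(F has_real_derivative f t) (at t within {t-1..t+1})"
    by (rule has_field_derivative_transform_within[where d=1])
       (auto simp: dist_real_def F_diff[OF assms])
  then show ?thesis by (simp add: at_within_Icc_at)
qed

theorem corollary2:
  fixes F f :: "real \<Rightarrow> real" and l :: int and x x' :: real
  assumes "smooth_distribution F f"
    and "regular_distribution F f"
    and "x < x'"
    and "2 powr (- real_of_int l) \<le> 1 - F x'"
    and "1 - F x' < 1 - F x"
    and "1 - F x \<le> 2 powr (- real_of_int l + 1)"
  shows "f x' > 2 powr (-33) * f x"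
proof -
  have pdf: "is_pdf_cdf F f" and C1: "C1_fun f" using assms(1) unfolding smooth_distribution_def by auto
  have fnn: "\<And>t. 0 \<le> f t" using pdf unfolding is_pdf_cdf_def by auto
  obtain f' where f'd: "\<And>t. (f has_real_derivative f' t) (at t)" using C1 unfolding C1_fun_def by auto
  have df: "\<And>t. deriv f t = f' t" using f'd DERIV_imp_deriv by blast
  have reg: "\<And>t. f' t * (1 - F t) \<ge> - 2 * (f t)\<^sup>2"
    using assms(2) df unfolding regular_distribution_def by metis
  have fc: "continuous_on UNIV f"
    by (meson DERIV_isCont continuous_at_imp_continuous_on f'd)
  have Fd: "\<And>t. (F has_real_derivative f t) (at t)" using F_deriv[OF pdf fc] .
  have Fmono: "\<And>a b. a \<le> b \<Longrightarrow> F a \<le> F b"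
  proof -
    fix a b :: real assume "a \<le> b"
    have "integral {a..b} f \<ge> 0"
      by (rule integral_nonneg) (auto simp: fnn intro: integrable_continuous_real continuous_on_subset[OF fc])
    then show "F a \<le> F b" using F_diff[OF pdf fc \<open>a \<le> b\<close>] by simp
  qed
  define G where "G t = 1 - F t" for t
  have Gpos0: "G x' > 0" 
  proof -
    have "(0::real) < 2 powr (- real_of_int l)" by simp
    from order_less_le_trans[OF this assms(4)] show ?thesis unfolding G_def .
  qed
  have Gpos: "\<And>t. t \<le> x' \<Longrightarrow> G t > 0" 
  proof -
    fix t assume "t \<le> x'"
    then have "F t \<le> F x'" by (rule Fmono)
    then have "G x' \<le> G t" unfolding G_def by simp
    then show "G t > 0" using Gpos0 by simp
  qed
  define h where "h t = f t / (G t)\<^sup>2" for t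
  have hd: "\<And>t. t \<le> x' \<Longrightarrow> (h has_real_derivative (f' t * (G t)\<^sup>2 + 2 * (f t)\<^sup>2 * G t) / ((G t)\<^sup>2)\<^sup>2) (at t)"
  proof -
    fix t assume t: "t \<le> x'"
    have Gd: "(G has_real_derivative - f t) (at t)" unfolding G_def
      using Fd[of t] by (auto intro!: derivative_eq_intros)
    have "(h has_real_derivative (f' t * (G t)\<^sup>2 - f t * (2 * G t * (- f t))) / ((G t)\<^sup>2)\<^sup>2) (at t)"
      unfolding h_def[abs_def]
      using Gpos[OF t] f'd[of t] Gd
      by (auto intro!: derivative_eq_intros simp: power2_eq_square)
    then show "?thesis t" by (simp add: algebra_simps power2_eq_square)
  qed
  have hmono: "\<And>s t. s \<le> t \<Longrightarrow> t \<le> x' \<Longrightarrow> h s \<le> h t"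
  proof -
    fix s t :: real assume st: "s \<le> t" "t \<le> x'"
    show "h s \<le> h t"
    proof (rule DERIV_nonneg_imp_increasing_open[OF st(1)])
      fix y assume y: "s < y" "y < t"
      then have yx: "y \<le> x'" using st by auto
      have "0 \<le> f' y * G y + 2 * (f y)\<^sup>2" using reg[of y] unfolding G_def by simp
      then have "0 \<le> (f' y * G y + 2 * (f y)\<^sup>2) * G y" using Gpos[OF yx] by simp
      then have "0 \<le> f' y * (G y)\<^sup>2 + 2 * (f y)\<^sup>2 * G y" by (simp add: algebra_simps power2_eq_square)
      then show "\<exists>d. DERIV h y :> d \<and> 0 \<le> d" using hd[OF yx]
        by (intro exI[of _ "(f' y * (G y)\<^sup>2 + 2 * (f y)\<^sup>2 * G y) / ((G y)\<^sup>2)\<^sup>2"] conjI) auto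
    next
      show "continuous_on {s..t} h"
        using st by (intro continuous_at_imp_continuous_on ballI) (metis DERIV_isCont hd atLeastAtMost_iff order_trans)
    qed
  qed
  have key: "h x \<le> h x'" using hmono assms(3) by simp
  have pw: "2 powr (- real_of_int l + 1) = 2 * 2 powr (- real_of_int l)"
    using powr_add[of 2 "- real_of_int l" 1] by simp
  have Gx: "G x \<le> 2 * G x'"
  proof -
    obtain c where c: "c = 2 powr (- real_of_int l)" by blast
    have "c \<le> 1 - F x'" "1 - F x \<le> 2 * c" using assms(4,6) pw c by auto
    then show ?thesis unfolding G_def by (simp add: algebra_simps)
  qed
  have Gxpos: "G x > 0" using Gpos assms(3) by simp
  have "f x / (G x)\<^sup>2 \<le> f x' / (G x')\<^sup>2" using key unfolding h_def .
  then have "f x * (G x')\<^sup>2 \<le> f x' * (G x)\<^sup>2" using Gpos0 Gxpos by (simp add: field_simps)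
  moreover have "(G x)\<^sup>2 \<le> 4 * (G x')\<^sup>2" 
  proof -
    have "(G x)\<^sup>2 \<le> (2 * G x')\<^sup>2" using Gx Gxpos by (intro power_mono) auto
    then show ?thesis by (simp add: power_mult_distrib)
  qed
  ultimately have "f x * (G x')\<^sup>2 \<le> f x' * (4 * (G x')\<^sup>2)"
    using mult_left_mono[OF _ fnn[of x']] order_trans by blast
  then have main: "f x \<le> 4 * f x'" using Gpos0 by (simp add: algebra_simps)
  show ?thesis
  proof (cases "f x > 0")
    case True
    have "2 powr (-33) * f x < f x / 4" using True by (simp add: powr_minus)
    then show ?thesis using main by simp
  next
    case False
    show ?thesis
    proof (rule ccontr)
      assume "\<not> ?thesis"
      then have fx0: "f x' = 0" using False fnn[of x] fnn[of x'] by simp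
      have z: "\<And>t. t \<in> {x..x'} \<Longrightarrow> f t = 0"
      proof -
        fix t assume "t \<in> {x..x'}"
        then have "h t \<le> h x'" using hmono by auto
        then have "f t / (G t)\<^sup>2 \<le> 0" unfolding h_def using fx0 by simp
        moreover have "G t > 0" using Gpos \<open>t \<in> {x..x'}\<close> by auto
        ultimately have "f t \<le> 0" by (simp add: divide_le_0_iff)
        then show "f t = 0" using fnn[of t] by simp
      qed
      have "integral {x..x'} f = integral {x..x'} (\<lambda>_. 0::real)"
        by (rule integral_cong) (use z in auto)
      then have "F x' = F x" using F_diff[OF pdf fc, of x x'] assms(3) by simp
      then show False using assms(5) by simp
    qed
  qed
qed

end
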